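(* If an $R$-module $M$ is prime and uniform, then $M$ is strongly prime.
   Context: $R$ is a commutative Noetherian local ring. A module $M\neq0$ is prime if every $r\in R$ acts on $M$ either as zero or injectively. A module is uniform if it is nonzero and any two nonzero submodules intersect nontrivially. A module $M\ne0$ is strongly prime if every nonzero $R$-endomorphism $f:M\to M$ is injective. *)

theory Defs
  imports Complex_Main
begin

definition is_ideal :: "'a::comm_ring_1 set \<Rightarrow> bool" where
  "is_ideal I \<longleftrightarrow> module.subspace ((*) :: 'a \<Rightarrow> 'a \<Rightarrow> 'a) I"

definition maximal_ideal :: "'a::comm_ring_1 set \<Rightarrow> bool" where
  "maximal_ideal m \<longleftrightarrow> is_ideal m \<and> m \<noteq> UNIV \<and>
     (\<forall>J. is_ideal J \<and> m \<subseteq> J \<longrightarrow> J = m \<or> J = UNIV)"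

definition noetherian_ring :: "'a::comm_ring_1 itself \<Rightarrow> bool" where
  "noetherian_ring _ \<longleftrightarrow>
     (\<forall>I::'a set. is_ideal I \<longrightarrow>
        (\<exists>F. finite F \<and> I = module.span ((*) :: 'a \<Rightarrow> 'a \<Rightarrow> 'a) F))"

definition local_ring :: "'a::comm_ring_1 itself \<Rightarrow> bool" where
  "local_ring _ \<longleftrightarrow> (\<exists>!m::'a set. maximal_ideal m)"

text \<open>An R-module is given by a type 'm::ab_group_add with scalar multiplication
  scale satisfying the module axioms; the module is all of the type.\<close>

definition prime_module :: "('a::comm_ring_1 \<Rightarrow> 'm::ab_group_add \<Rightarrow> 'm) \<Rightarrow> bool" where
  "prime_module scale \<longleftrightarrow> module scale \<and> (\<exists>x::'m. x \<noteq> 0) \<and>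
     (\<forall>r. (\<forall>x. scale r x = 0) \<or> inj (scale r))"

definition uniform_module :: "('a::comm_ring_1 \<Rightarrow> 'm::ab_group_add \<Rightarrow> 'm) \<Rightarrow> bool" where
  "uniform_module scale \<longleftrightarrow> module scale \<and> (\<exists>x::'m. x \<noteq> 0) \<and>
     (\<forall>N1 N2. module.subspace scale N1 \<and> module.subspace scale N2 \<and>
        N1 \<noteq> {0} \<and> N2 \<noteq> {0} \<longrightarrow> N1 \<inter> N2 \<noteq> {0})"

definition strongly_prime_module :: "('a::comm_ring_1 \<Rightarrow> 'm::ab_group_add \<Rightarrow> 'm) \<Rightarrow> bool" where
  "strongly_prime_module scale \<longleftrightarrow> module scale \<and> (\<exists>x::'m. x \<noteq> 0) \<and>
     (\<forall>f. module_hom scale scale f \<and> f \<noteq> (\<lambda>x. 0) \<longrightarrow> inj f)"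

end

theory Submission
  imports Defs
begin

theorem lemma2p1:
  fixes scale :: "'a::comm_ring_1 \<Rightarrow> 'm::ab_group_add \<Rightarrow> 'm"
  assumes "noetherian_ring TYPE('a)"
    and "local_ring TYPE('a)"
    and "module scale"
    and "prime_module scale"
    and "uniform_module scale"
  shows "strongly_prime_module scale"
proof -
  interpret module scale by fact
  have pr: "\<And>r. (\<forall>x. scale r x = 0) \<or> inj (scale r)"
    using assms(4) unfolding prime_module_def by blast
  have un: "\<And>N1 N2. subspace N1 \<Longrightarrow> subspace N2 \<Longrightarrow> N1 \<noteq> {0} \<Longrightarrow> N2 \<noteq> {0} \<Longrightarrow> N1 \<inter> N2 \<noteq> {0}"
    using assms(5) unfolding uniform_module_def by blast
  have ne: "\<exists>x::'m. x \<noteq> 0" using assms(4) unfolding prime_module_def by blast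
  have "inj f" if hom: "module_hom scale scale f" and nz: "f \<noteq> (\<lambda>x. 0)" for f
  proof -
    interpret h: module_hom scale scale f by fact
    have ker: "x = 0" if fx: "f x = 0" for x
    proof (rule ccontr)
      assume x0: "x \<noteq> 0"
      obtain y where fy: "f y \<noteq> 0" using nz by auto
      hence y0: "y \<noteq> 0" by auto
      have s1: "span {x} \<noteq> {0}" using x0 span_base[of x "{x}"] by auto
      have s2: "span {y} \<noteq> {0}" using y0 span_base[of y "{y}"] by auto
      from un[OF subspace_span subspace_span s1 s2]
      obtain z where z: "z \<in> span {x}" "z \<in> span {y}" "z \<noteq> 0"
        using span_zero by blast
      then obtain a b where a: "z = scale a x" and b: "z = scale b y"
        unfolding span_singleton by (metis image_iff)
      have "\<not> (\<forall>w. scale b w = 0)" using b z(3) by auto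
      hence ib: "inj (scale b)" using pr by blast
      have "f z = scale b (f y)" using b h.scale by simp
      moreover have "f z = 0" using a h.scale fx by simp
      ultimately have "scale b (f y) = scale b 0" by simp
      with ib fy show False by (meson injD)
    qed
    show "inj f"
    proof (rule injI)
      fix u v assume "f u = f v"
      hence "f (u - v) = 0"
        using h.add[of u "- v"] h.neg[of v] by simp
      hence "u - v = 0" by (rule ker)
      thus "u = v" by simp
    qed
  qed
  thus ?thesis unfolding strongly_prime_module_def using assms(3) ne by blast
qed

end
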